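(* Under the standing assumptions, for fixed $\lambda>0$ and $\eta_1=\frac1d+\frac{\lambda}{n^{1-(k-1)\alpha}\ln d}$, $$\Phi(n\eta_1)=o\!\left(\exp\left\{-\left(\frac{\lambda^2}{2}+o(1)\right)\frac{n^{(2k-1)\alpha-1}}{(\ln d)^2}\right\}\right)\quad(n\to\infty),$$ where $n\eta_1$ is treated as an integer (equivalently, $\Phi$ is evaluated through its Gamma-function extension $\Phi_c$).
   Context: Parameters: integer $k\ge2$, constants $\alpha>0$, $r>0$, $0<p<1$; $d=n^{\alpha}$ (treated as an integer), $m=n\ln d$, $\tau=\frac1{1-p}$, $r_{cr}=\frac1{\ln\tau}$. Standing assumptions: $(2k-1)\alpha>1$, $k\alpha\le1$, $k\ge\frac{\tau\ln\tau}{\tau-1}$, and $r<r_{cr}$. Notation: $f(s)=1+\frac{p}{1-p}\cdot\frac{s^k-d^{-k}}{1-d^{-k}}$ for $s\in[0,1]$; $B(S)=\binom{n}{S}\left(\frac1d\right)^{S}\left(1-\frac1d\right)^{n-S}$; $W(S)=f(S/n)^{rm}$; $\Phi(S)=B(S)W(S)$; its real extension is $\Phi_c(z)=\frac{\Gamma(n+1)}{\Gamma(z+1)\Gamma(n-z+1)}\left(\frac1d\right)^{z}\left(1-\frac1d\right)^{n-z}f(z/n)^{rm}$ for $z\in[0,n]$. *)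

theory Defs
  imports "HOL-Analysis.Analysis" "HOL-Library.Landau_Symbols"
begin

text \<open>d = n^alpha (kept real; the paper treats it as an integer, rounding ignored).\<close>
definition dpar :: "real \<Rightarrow> nat \<Rightarrow> real" where
  "dpar \<alpha> n = real n powr \<alpha>"

definition mpar :: "real \<Rightarrow> nat \<Rightarrow> real" where
  "mpar \<alpha> n = real n * ln (dpar \<alpha> n)"

definition tau :: "real \<Rightarrow> real" where
  "tau p = 1 / (1 - p)"

definition fpar :: "real \<Rightarrow> nat \<Rightarrow> real \<Rightarrow> real \<Rightarrow> real" where
  "fpar p k d s = 1 + p / (1 - p) * (s ^ k - inverse (d ^ k)) / (1 - inverse (d ^ k))"

text \<open>Real (Gamma-function) extension Phi_c of Phi(S) = B(S) W(S).\<close>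
definition Phi_c :: "real \<Rightarrow> real \<Rightarrow> real \<Rightarrow> nat \<Rightarrow> nat \<Rightarrow> real \<Rightarrow> real" where
  "Phi_c \<alpha> r p k n z =
     Gamma (real n + 1) / (Gamma (z + 1) * Gamma (real n - z + 1))
     * (1 / dpar \<alpha> n) powr z * (1 - 1 / dpar \<alpha> n) powr (real n - z)
     * fpar p k (dpar \<alpha> n) (z / real n) powr (r * mpar \<alpha> n)"

end

theory Submission
  imports Defs "HOL-Real_Asymp.Real_Asymp"
begin


lemma lnG_convex_pt:
  fixes x y t :: real
  assumes "x > 0" "y > 0" "0 \<le> t" "t \<le> 1"
  shows "ln (Gamma ((1 - t) * x + t * y)) \<le> (1 - t) * ln (Gamma x) + t * ln (Gamma y)"
  using convex_onD[OF log_convex_Gamma_real assms(3,4), of x y] assms by simp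

lemma binom_term_le1:
  fixes a :: real and n j :: nat
  assumes "0 \<le> a" "a \<le> 1" "j \<le> n"
  shows "real (n choose j) * a ^ j * (1 - a) ^ (n - j) \<le> 1"
proof -
  have "real (n choose j) * a ^ j * (1 - a) ^ (n - j) \<le> (\<Sum>i\<le>n. real (n choose i) * a ^ i * (1 - a) ^ (n - i))"
    by (rule member_le_sum[where f="\<lambda>i. real (n choose i) * a ^ i * (1 - a) ^ (n - i)"]) (use assms in auto)
  also have "\<dots> = (a + (1 - a)) ^ n" by (rule binomial_ring[symmetric])
  finally show ?thesis by simp
qed

lemma gamma_binom_bound:
  fixes n :: nat and z :: real
  assumes z2: "2 \<le> z" and zn: "z \<le> real n - 1"
  shows "ln (Gamma (real n + 1)) - ln (Gamma (z + 1)) - ln (Gamma (real n - z + 1))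
          + z * ln (z / n) + (real n - z) * ln (1 - z / n) \<le> ln 6"
proof -
  define j where "j = nat \<lfloor>z\<rfloor>"
  have jz: "real j \<le> z" "z < real j + 1" using z2 unfolding j_def by linarith+
  have j2: "j \<ge> 1" using jz z2 by linarith
  have jn: "j \<le> n - 1" "j < n" using jz zn by linarith+
  define s where "s = z - real j"
  have s01: "0 \<le> s" "s < 1" using jz unfolding s_def by auto
  define \<sigma> where "\<sigma> = 1 / (s + 1)"
  have \<sigma>01: "0 \<le> \<sigma>" "\<sigma> \<le> 1" using s01 unfolding \<sigma>_def by auto
  have sig: "\<sigma> * (s + 1) = 1" unfolding \<sigma>_def using s01 by simp
  have c1: "ln (Gamma (real j + 1)) \<le> (1 - \<sigma>) * ln (Gamma (real j)) + \<sigma> * ln (Gamma (z + 1))"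
  proof -
    have "(1 - \<sigma>) * real j + \<sigma> * (z + 1) = real j + \<sigma> * (s + 1)"
      unfolding s_def by (simp add: algebra_simps)
    hence "(1 - \<sigma>) * real j + \<sigma> * (z + 1) = real j + 1" using sig by simp
    with lnG_convex_pt[of "real j" "z + 1" \<sigma>] show ?thesis using j2 z2 \<sigma>01 by simp
  qed
  have c2: "ln (Gamma (real n - real j + 1)) \<le> (1 - \<sigma>) * ln (Gamma (real n - real j + 2)) + \<sigma> * ln (Gamma (real n - z + 1))"
  proof -
    have "(1 - \<sigma>) * (real n - real j + 2) + \<sigma> * (real n - z + 1) = real n - real j + 2 - \<sigma> * (s + 1)"
      unfolding s_def by (simp add: algebra_simps)
    hence "(1 - \<sigma>) * (real n - real j + 2) + \<sigma> * (real n - z + 1) = real n - real j + 1" using sig by simp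
    with lnG_convex_pt[of "real n - real j + 2" "real n - z + 1" \<sigma>] show ?thesis using jn zn \<sigma>01 by simp
  qed
  have g1: "ln (Gamma (real j + 1)) = ln (Gamma (real j)) + ln (real j)"
  proof -
    have "Gamma (real j + 1) = real j * Gamma (real j)"
      by (rule Gamma_plus1) (use j2 in \<open>auto simp: nonpos_Ints_def\<close>)
    moreover have "Gamma (real j) > 0" using j2 by simp
    moreover have "real j > 0" using j2 by simp
    ultimately show ?thesis by (simp add: ln_mult_pos)
  qed
  have g2: "ln (Gamma (real n - real j + 2)) = ln (Gamma (real n - real j + 1)) + ln (real n - real j + 1)"
  proof -
    have "Gamma ((real n - real j + 1) + 1) = (real n - real j + 1) * Gamma (real n - real j + 1)"
      by (rule Gamma_plus1) (use jn in \<open>auto simp: nonpos_Ints_def\<close>)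
    moreover have "Gamma (real n - real j + 1) > 0" using jn by simp
    moreover have "real n - real j + 1 > 0" using jn by simp
    ultimately have "ln (Gamma ((real n - real j + 1) + 1)) = ln (real n - real j + 1) + ln (Gamma (real n - real j + 1))"
      by (simp add: ln_mult_pos)
    moreover have "(real n - real j + 1) + 1 = real n - real j + 2" by simp
    ultimately show ?thesis by simp
  qed
  have lz: "ln (Gamma (z + 1)) \<ge> ln (Gamma (real j + 1)) + s * ln (real j)"
  proof -
    have "(s + 1) * ln (Gamma (real j + 1)) \<le> (s + 1) * ((1 - \<sigma>) * ln (Gamma (real j)) + \<sigma> * ln (Gamma (z + 1)))"
      using c1 s01 by (intro mult_left_mono) auto
    also have "\<dots> = (s + 1) * ln (Gamma (real j)) - (\<sigma> * (s + 1)) * ln (Gamma (real j)) + (\<sigma> * (s + 1)) * ln (Gamma (z + 1))"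
      by (simp add: algebra_simps)
    also have "\<dots> = s * ln (Gamma (real j)) + ln (Gamma (z + 1))"
      using sig by (simp add: algebra_simps)
    finally show ?thesis using g1 by (simp add: algebra_simps)
  qed
  have lnz: "ln (Gamma (real n - z + 1)) \<ge> ln (Gamma (real n - real j + 1)) - s * ln (real n - real j + 1)"
  proof -
    have "(s + 1) * ln (Gamma (real n - real j + 1)) \<le> (s + 1) * ((1 - \<sigma>) * ln (Gamma (real n - real j + 2)) + \<sigma> * ln (Gamma (real n - z + 1)))"
      using c2 s01 by (intro mult_left_mono) auto
    also have "\<dots> = (s + 1) * ln (Gamma (real n - real j + 2)) - (\<sigma> * (s + 1)) * ln (Gamma (real n - real j + 2)) + (\<sigma> * (s + 1)) * ln (Gamma (real n - z + 1))"
      by (simp add: algebra_simps)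
    also have "\<dots> = s * ln (Gamma (real n - real j + 2)) + ln (Gamma (real n - z + 1))"
      using sig by (simp add: algebra_simps)
    finally show ?thesis using g2 by (simp add: algebra_simps)
  qed
  define a where "a = z / real n"
  have n0: "real n > 0" using zn z2 by linarith
  have a01: "0 < a" "a < 1" unfolding a_def using z2 zn n0 by (auto simp: field_simps)
  have binom: "ln (Gamma (real n + 1)) - ln (Gamma (real j + 1)) - ln (Gamma (real n - real j + 1))
      + real j * ln a + (real n - real j) * ln (1 - a) \<le> 0"
  proof -
    have le1: "real (n choose j) * a ^ j * (1 - a) ^ (n - j) \<le> 1"
      using binom_term_le1[of a j n] a01 jn by auto
    have ch: "real (n choose j) = Gamma (real n + 1) / (Gamma (real j + 1) * Gamma (real n - real j + 1))"
    proof -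
      have "Gamma (real n + 1) = fact n" using Gamma_fact[of n] by (simp add: add.commute)
      moreover have "Gamma (real j + 1) = fact j" using Gamma_fact[of j] by (simp add: add.commute)
      moreover have "Gamma (real n - real j + 1) = fact (n - j)"
        using Gamma_fact[of "n - j"] jn by (simp add: add.commute of_nat_diff)
      ultimately show ?thesis using binomial_fact[of j n] jn by simp
    qed
    have pos: "Gamma (real n + 1) > 0" "Gamma (real j + 1) > 0" "Gamma (real n - real j + 1) > 0"
      using jn by auto
    have "ln (real (n choose j) * a ^ j * (1 - a) ^ (n - j)) \<le> 0"
      using le1 a01 jn by (subst ln_le_zero_iff) (auto intro!: mult_pos_pos)
    moreover have "ln (real (n choose j) * a ^ j * (1 - a) ^ (n - j)) =
       ln (Gamma (real n + 1)) - ln (Gamma (real j + 1)) - ln (Gamma (real n - real j + 1))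
      + real j * ln a + (real n - real j) * ln (1 - a)"
      using pos a01 jn unfolding ch by (simp add: ln_mult ln_div ln_realpow of_nat_diff less_imp_neq[symmetric])
    ultimately show ?thesis by simp
  qed
  define X where "X = (real n - real j + 1) * z / (real j * (real n - z))"
  have Xpos: "X > 0" unfolding X_def using jn j2 zn z2 by (auto intro!: divide_pos_pos mult_pos_pos)
  have X6: "X \<le> 6"
  proof -
    have "(real n - real j + 1) \<le> 3 * (real n - z)" using jz zn by (simp add: algebra_simps)
    moreover have "z \<le> 2 * real j" using jz j2 by linarith
    ultimately have "(real n - real j + 1) * z \<le> (3 * (real n - z)) * (2 * real j)"
      using jn z2 by (intro mult_mono) auto
    thus ?thesis unfolding X_def using j2 zn by (simp add: field_simps)
  qed
  have lnX: "ln X = ln (real n - real j + 1) - ln (real j) + ln a - ln (1 - a)"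
  proof -
    have "X = (real n - real j + 1) / real j * (a / (1 - a))"
      unfolding X_def a_def using n0 zn by (simp add: field_simps)
    thus ?thesis using jn j2 a01 by (simp add: ln_mult ln_div)
  qed
  have sX: "s * ln X \<le> ln 6"
  proof (cases "X \<le> 1")
    case True
    hence "ln X \<le> 0" using Xpos by simp
    hence "s * ln X \<le> 0" using s01 by (simp add: mult_nonneg_nonpos)
    moreover have "ln (6::real) \<ge> 0" by simp
    ultimately show ?thesis by linarith
  next
    case False
    hence "ln X \<ge> 0" by simp
    hence "s * ln X \<le> ln X" using s01 by (simp add: mult_left_le_one_le)
    also have "\<dots> \<le> ln 6" using X6 Xpos by simp
    finally show ?thesis .
  qed
  have zs: "z = real j + s" unfolding s_def by simp
  have "ln (Gamma (real n + 1)) - ln (Gamma (z + 1)) - ln (Gamma (real n - z + 1))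
          + z * ln a + (real n - z) * ln (1 - a)
      \<le> (ln (Gamma (real n + 1)) - ln (Gamma (real j + 1)) - ln (Gamma (real n - real j + 1))
      + real j * ln a + (real n - real j) * ln (1 - a)) + s * ln X"
    using lz lnz unfolding lnX zs by (simp add: algebra_simps)
  also have "\<dots> \<le> ln 6" using binom sX by linarith
  finally show ?thesis unfolding a_def .
qed



lemma ln1p_lower:
  fixes u :: real assumes "u \<ge> 0"
  shows "2 * u / (2 + u) \<le> ln (1 + u)"
proof -
  let ?h = "\<lambda>u::real. ln (1 + u) - 2 * u / (2 + u)"
  have "?h 0 \<le> ?h u"
  proof (rule DERIV_nonneg_imp_nondecreasing[OF assms])
    fix x :: real assume x: "0 \<le> x" "x \<le> u"
    have "(?h has_real_derivative (1 / (1 + x) - 4 / (2 + x)^2)) (at x)"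
      using x by (auto intro!: derivative_eq_intros simp: power2_eq_square)
    moreover have "1 / (1 + x) - 4 / (2 + x)^2 \<ge> 0"
    proof -
      have a: "4 * (1 + x) \<le> (2 + x)^2" by (simp add: power2_eq_square algebra_simps)
      have b: "(2 + x)^2 > 0" "1 + x > 0" using x by auto
      have "4 / (2 + x)^2 \<le> 1 / (1 + x)" using a b by (simp add: divide_simps)
      thus ?thesis by simp
    qed
    ultimately show "\<exists>y. (?h has_real_derivative y) (at x) \<and> 0 \<le> y" by blast
  qed
  thus ?thesis by simp
qed

lemma kl_bound:
  fixes \<mu> t n :: real
  assumes "\<mu> > 0" "t \<ge> 0" "\<mu> + t < n"
  shows "(\<mu> + t) * ln (\<mu> / (\<mu> + t)) + (n - (\<mu> + t)) * ln ((n - \<mu>) / (n - (\<mu> + t)))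
         \<le> - (t^2 / \<mu>) / (2 + t / \<mu>)"
proof -
  define u where "u = t / \<mu>"
  have u0: "u \<ge> 0" unfolding u_def using assms by simp
  have tu: "t = \<mu> * u" unfolding u_def using assms by simp
  have A: "(n - (\<mu> + t)) * ln ((n - \<mu>) / (n - (\<mu> + t))) \<le> t"
  proof -
    have "ln ((n - \<mu>) / (n - (\<mu> + t))) \<le> (n - \<mu>) / (n - (\<mu> + t)) - 1"
      using assms by (intro ln_le_minus_one) auto
    hence "(n - (\<mu> + t)) * ln ((n - \<mu>) / (n - (\<mu> + t))) \<le> (n - (\<mu> + t)) * ((n - \<mu>) / (n - (\<mu> + t)) - 1)"
      using assms by (intro mult_left_mono) auto
    also have "\<dots> = t" using assms by (simp add: field_simps)
    finally show ?thesis .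
  qed
  have B: "ln (\<mu> / (\<mu> + t)) = - ln (1 + u)"
  proof -
    have "\<mu> / (\<mu> + t) = inverse (1 + u)" unfolding tu
    proof -
      have "\<mu> + \<mu> * u > 0" using assms u0 by (simp add: add_pos_nonneg)
      moreover have "1 + u > 0" using u0 by simp
      ultimately show "\<mu> / (\<mu> + \<mu> * u) = inverse (1 + u)" using assms by (simp add: field_simps)
    qed
    thus ?thesis using u0 by (simp add: ln_inverse)
  qed
  have C: "(\<mu> + t) * ln (\<mu> / (\<mu> + t)) \<le> - ((\<mu> + t) * (2 * u / (2 + u)))"
  proof -
    have "(\<mu> + t) * (2 * u / (2 + u)) \<le> (\<mu> + t) * ln (1 + u)"
      using ln1p_lower[OF u0] assms by (intro mult_left_mono) auto
    thus ?thesis unfolding B mult_minus_right by linarith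
  qed
  have D: "- ((\<mu> + t) * (2 * u / (2 + u))) + t = - (t^2 / \<mu>) / (2 + t / \<mu>)"
    unfolding u_def[symmetric] unfolding tu using assms u0 by (simp add: field_simps power2_eq_square)
  show ?thesis using A C D by linarith
qed

lemma pow_diff_bound:
  fixes u :: real and k :: nat assumes "0 \<le> u" "u \<le> 1"
  shows "(1 + u) ^ k - 1 \<le> real k * 2 ^ k * u"
proof -
  have "(1 + u) ^ k - 1 ^ k = ((1 + u) - 1) * (\<Sum>i<k. 1 ^ (k - Suc i) * (1 + u) ^ i)"
    by (rule power_diff_sumr2)
  also have "\<dots> = u * (\<Sum>i<k. (1 + u) ^ i)" by simp
  also have "\<dots> \<le> u * (\<Sum>i<k. 2 ^ k)"
  proof (intro mult_left_mono sum_mono)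
    fix i assume "i \<in> {..<k}"
    hence "(1 + u) ^ i \<le> 2 ^ i" using assms by (intro power_mono) auto
    also have "(2::real) ^ i \<le> 2 ^ k" using \<open>i \<in> {..<k}\<close> by (intro power_increasing) auto
    finally show "(1 + u) ^ i \<le> 2 ^ k" .
  qed (use assms in auto)
  finally show ?thesis by (simp add: algebra_simps)
qed

lemma f_bound:
  fixes p q u M :: real and k :: nat
  assumes "0 < p" "p < 1" "0 < q" "q ^ k \<le> 1/2" "0 \<le> u" "u \<le> 1" "M \<ge> 0"
  shows "fpar p k (1 / q) (q * (1 + u)) > 0"
    and "M * ln (fpar p k (1 / q) (q * (1 + u))) \<le> 2 * p / (1 - p) * real k * 2 ^ k * (M * q ^ k * u)"
proof -
  have qk: "inverse ((1 / q) ^ k) = q ^ k" by (simp add: power_one_over)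
  define c where "c = p / (1 - p)"
  have c0: "c > 0" unfolding c_def using assms by simp
  have f: "fpar p k (1 / q) (q * (1 + u)) = 1 + c * (q ^ k * ((1 + u) ^ k - 1)) / (1 - q ^ k)"
    unfolding fpar_def qk c_def power_mult_distrib by (simp add: algebra_simps)
  have d1: "1 - q ^ k \<ge> 1/2" using assms by simp
  have e0: "(1 + u) ^ k - 1 \<ge> 0" using assms by simp
  have X0: "c * (q ^ k * ((1 + u) ^ k - 1)) / (1 - q ^ k) \<ge> 0"
    using c0 e0 d1 assms by (intro divide_nonneg_pos mult_nonneg_nonneg) auto
  show pos: "fpar p k (1 / q) (q * (1 + u)) > 0" unfolding f using X0 by linarith
  have "ln (fpar p k (1 / q) (q * (1 + u))) \<le> c * (q ^ k * ((1 + u) ^ k - 1)) / (1 - q ^ k)"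
    using ln_le_minus_one[OF pos] unfolding f by simp
  also have "\<dots> \<le> 2 * (c * (q ^ k * ((1 + u) ^ k - 1)))"
  proof -
    have X: "c * (q ^ k * ((1 + u) ^ k - 1)) \<ge> 0" using c0 e0 assms by simp
    have "c * (q ^ k * ((1 + u) ^ k - 1)) / (1 - q ^ k) \<le> c * (q ^ k * ((1 + u) ^ k - 1)) / (1/2)"
      using X d1 by (intro divide_left_mono) auto
    thus ?thesis by simp
  qed
  also have "\<dots> \<le> 2 * (c * (q ^ k * (real k * 2 ^ k * u)))"
    using pow_diff_bound[OF assms(5,6), of k] c0 assms by (intro mult_left_mono) auto
  finally have "ln (fpar p k (1 / q) (q * (1 + u))) \<le> 2 * (c * (q ^ k * (real k * 2 ^ k * u)))" .
  hence "M * ln (fpar p k (1 / q) (q * (1 + u))) \<le> M * (2 * (c * (q ^ k * (real k * 2 ^ k * u))))"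
    using assms by (intro mult_left_mono) auto
  thus "M * ln (fpar p k (1 / q) (q * (1 + u))) \<le> 2 * p / (1 - p) * real k * 2 ^ k * (M * q ^ k * u)"
    unfolding c_def by (simp add: algebra_simps)
qed



lemma pointwise:
  fixes k n :: nat and \<alpha> r p lam d x :: real
  assumes k1: "k \<ge> 1" and r0: "r > 0" and p0: "0 < p" and p1: "p < 1"
    and dd: "d = dpar \<alpha> n" and d2: "d \<ge> 2"
    and xd: "x = lam / (real n powr (1 - (real k - 1) * \<alpha>) * ln d)" and x0: "x \<ge> 0"
    and mu2: "2 \<le> real n / d" and mun: "2 * (real n / d) \<le> real n - 1" and u1: "x * d \<le> 1"
  shows "Phi_c \<alpha> r p k n (real n * (1 / d + x)) \<le>
           6 * exp (- ((real n * x)^2 / (real n / d)) / (2 + x * d))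
             * exp (2 * p / (1 - p) * real k * 2 ^ k * (r * (real n * ln d) * (1 / d) ^ k * (x * d)))"
    and "Phi_c \<alpha> r p k n (real n * (1 / d + x)) > 0"
proof -
  define z where "z = real n * (1 / d + x)"
  define \<mu> where "\<mu> = real n / d"
  define t where "t = real n * x"
  define q where "q = 1 / d"
  define u where "u = x * d"
  define M where "M = r * (real n * ln d)"
  have dpos: "d > 0" using d2 by simp
  have npos: "real n > 0" using mu2 dpos by (auto simp: field_simps)
  have zmt: "z = \<mu> + t" unfolding z_def \<mu>_def t_def by (simp add: algebra_simps)
  have t0: "t \<ge> 0" unfolding t_def using x0 by simp
  have tmu: "t / \<mu> = u" unfolding t_def \<mu>_def u_def using npos dpos by (simp add: field_simps)
  have u0: "u \<ge> 0" unfolding u_def using x0 dpos by simp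
  have zle: "z \<le> 2 * \<mu>"
  proof -
    have "t = \<mu> * u" using tmu npos dpos unfolding \<mu>_def by (simp add: field_simps)
    moreover have "\<mu> * u \<le> \<mu> * 1" using u1 npos dpos unfolding u_def \<mu>_def
      by (intro mult_left_mono) auto
    ultimately have "t \<le> \<mu>" by simp
    thus ?thesis unfolding zmt by simp
  qed
  have z2: "2 \<le> z" using mu2 t0 zmt unfolding \<mu>_def by linarith
  have zn: "z \<le> real n - 1" using zle mun unfolding \<mu>_def by linarith
  have zq: "z / real n = q * (1 + u)" unfolding z_def q_def u_def using npos dpos
    by (simp add: field_simps)
  have q0: "q > 0" unfolding q_def using dpos by simp
  have qk: "q ^ k \<le> 1/2"
  proof -
    have "q ^ k \<le> q ^ 1" unfolding q_def using d2 k1 by (intro power_decreasing) auto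
    moreover have "q \<le> 1/2" unfolding q_def using d2 by (simp add: field_simps)
    ultimately show ?thesis by simp
  qed
  have M0: "M \<ge> 0" unfolding M_def using r0 npos d2 by simp
  have fd: "1 / q = d" unfolding q_def by simp
  have fb: "fpar p k d (z / real n) > 0"
    "M * ln (fpar p k d (z / real n)) \<le> 2 * p / (1 - p) * real k * 2 ^ k * (M * q ^ k * u)"
    using f_bound[OF p0 p1 q0 qk u0 _ M0] u1 unfolding zq fd u_def by auto
  define G where "G = Gamma (real n + 1) / (Gamma (z + 1) * Gamma (real n - z + 1))"
  have Gp: "Gamma (real n + 1) > 0" "Gamma (z + 1) > 0" "Gamma (real n - z + 1) > 0"
    using z2 zn npos by auto
  have G0: "G > 0" unfolding G_def using Gp by simp
  have q1: "1 - q > 0" unfolding q_def using d2 by simp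
  have Phi: "Phi_c \<alpha> r p k n z = G * q powr z * (1 - q) powr (real n - z) * fpar p k d (z / real n) powr M"
    unfolding Phi_c_def G_def q_def M_def mpar_def dd by simp
  have Ppos: "Phi_c \<alpha> r p k n z > 0" unfolding Phi using G0 q0 q1 fb by simp
  have lnPhi: "ln (Phi_c \<alpha> r p k n z) = (ln (Gamma (real n + 1)) - ln (Gamma (z + 1)) - ln (Gamma (real n - z + 1)))
       + z * ln q + (real n - z) * ln (1 - q) + M * ln (fpar p k d (z / real n))"
    unfolding Phi G_def using Gp q0 q1 fb
    by (simp add: ln_mult_pos ln_div ln_powr less_imp_neq[symmetric])
  have L1: "ln (Gamma (real n + 1)) - ln (Gamma (z + 1)) - ln (Gamma (real n - z + 1))
          + z * ln (z / n) + (real n - z) * ln (1 - z / n) \<le> ln 6"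
    by (rule gamma_binom_bound[OF z2 zn])
  have e1: "ln q - ln (z / real n) = ln (\<mu> / z)"
  proof -
    have "q / (z / real n) = \<mu> / z" unfolding q_def \<mu>_def by (simp add: field_simps)
    moreover have "ln (q / (z / real n)) = ln q - ln (z / real n)"
      using q0 z2 npos by (intro ln_divide_pos) auto
    ultimately show ?thesis by metis
  qed
  have e2: "ln (1 - q) - ln (1 - z / real n) = ln ((real n - \<mu>) / (real n - z))"
  proof -
    have "(1 - q) / (1 - z / real n) = (real n - \<mu>) / (real n - z)"
      unfolding q_def \<mu>_def using npos dpos zn by (simp add: field_simps)
    moreover have "1 - z / real n > 0" using zn npos by (simp add: field_simps)
    moreover have "ln ((1 - q) / (1 - z / real n)) = ln (1 - q) - ln (1 - z / real n)"
      using q1 \<open>1 - z / real n > 0\<close> by (intro ln_divide_pos) auto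
    ultimately show ?thesis by metis
  qed
  have KL: "z * ln (\<mu> / z) + (real n - z) * ln ((real n - \<mu>) / (real n - z)) \<le> - (t^2 / \<mu>) / (2 + t / \<mu>)"
    using kl_bound[of \<mu> t "real n"] mu2 t0 zn unfolding zmt \<mu>_def by auto
  have "ln (Phi_c \<alpha> r p k n z) \<le> ln 6 + (- (t^2 / \<mu>) / (2 + u)) + 2 * p / (1 - p) * real k * 2 ^ k * (M * q ^ k * u)"
  proof -
    have "ln (Phi_c \<alpha> r p k n z) = (ln (Gamma (real n + 1)) - ln (Gamma (z + 1)) - ln (Gamma (real n - z + 1))
          + z * ln (z / n) + (real n - z) * ln (1 - z / n))
        + (z * (ln q - ln (z / real n)) + (real n - z) * (ln (1 - q) - ln (1 - z / real n)))
        + M * ln (fpar p k d (z / real n))"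
      unfolding lnPhi by (simp add: algebra_simps)
    also have "\<dots> = (ln (Gamma (real n + 1)) - ln (Gamma (z + 1)) - ln (Gamma (real n - z + 1))
          + z * ln (z / n) + (real n - z) * ln (1 - z / n))
        + (z * ln (\<mu> / z) + (real n - z) * ln ((real n - \<mu>) / (real n - z)))
        + M * ln (fpar p k d (z / real n))"
      unfolding e1 e2 ..
    finally show ?thesis using L1 KL[unfolded tmu] fb(2) by linarith
  qed
  hence "Phi_c \<alpha> r p k n z \<le> exp (ln 6 + (- (t^2 / \<mu>) / (2 + u)) + 2 * p / (1 - p) * real k * 2 ^ k * (M * q ^ k * u))"
    using Ppos by (metis exp_ln exp_le_cancel_iff)
  also have "\<dots> = 6 * exp (- (t^2 / \<mu>) / (2 + u)) * exp (2 * p / (1 - p) * real k * 2 ^ k * (M * q ^ k * u))"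
    by (simp only: exp_add exp_ln[of 6])
  finally show "Phi_c \<alpha> r p k n (real n * (1 / d + x)) \<le>
           6 * exp (- ((real n * x)^2 / (real n / d)) / (2 + x * d))
             * exp (2 * p / (1 - p) * real k * 2 ^ k * (r * (real n * ln d) * (1 / d) ^ k * (x * d)))"
    unfolding z_def t_def \<mu>_def u_def M_def q_def .
  show "Phi_c \<alpha> r p k n (real n * (1 / d + x)) > 0" using Ppos unfolding z_def .
qed


lemma ra1: "lam > 0 \<Longrightarrow> \<alpha> > 0 \<Longrightarrow> ((\<lambda>n::nat. lam / (\<alpha> * ln (real n))) \<longlongrightarrow> 0) sequentially"
  by real_asymp
lemma ra2: "\<beta> > 0 \<Longrightarrow> \<alpha> > 0 \<Longrightarrow> ((\<lambda>n::nat. 1 / sqrt (real n powr \<beta> / (\<alpha> * ln (real n))^2)) \<longlongrightarrow> 0) sequentially"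
  by real_asymp
lemma ra3: "\<alpha> > 0 \<Longrightarrow> eventually (\<lambda>n::nat. 2 \<le> real n powr \<alpha>) sequentially"
  by real_asymp
lemma ra4: "\<alpha> > 0 \<Longrightarrow> \<alpha> < 1 \<Longrightarrow> eventually (\<lambda>n::nat. 2 \<le> real n powr (1 - \<alpha>)) sequentially"
  by real_asymp
lemma ra5: "\<alpha> > 0 \<Longrightarrow> \<alpha> < 1 \<Longrightarrow> eventually (\<lambda>n::nat. 2 * real n powr (1 - \<alpha>) \<le> real n - 1) sequentially"
  by real_asymp
lemma ra6: "\<beta> > 0 \<Longrightarrow> \<alpha> > 0 \<Longrightarrow> eventually (\<lambda>n::nat. 1 \<le> real n powr \<beta> / (\<alpha> * ln (real n))^2) sequentially"
  by real_asymp
lemma ra7: "\<beta> > 0 \<Longrightarrow> \<alpha> > 0 \<Longrightarrow> ((\<lambda>n::nat. exp (- sqrt (real n powr \<beta> / (\<alpha> * ln (real n))^2))) \<longlongrightarrow> 0) sequentially"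
  by real_asymp


lemma ident1:
  fixes N a c :: real assumes "N > 0"
  shows "N * N powr a / (N powr c)^2 = N powr (1 + a - 2 * c)"
proof -
  have e1: "N powr (1 + a - 2 * c) = N powr (1 + a) / N powr (2 * c)" by (rule powr_diff)
  have e2: "N powr (1 + a) = N powr 1 * N powr a" by (rule powr_add)
  have "2 * c = c + c" by simp
  hence e3: "N powr (2 * c) = N powr c * N powr c" using powr_add[of N c c] by simp
  have "N powr (1 + a - 2 * c) = N powr 1 * N powr a / (N powr c * N powr c)"
    unfolding e1 e2 e3 ..
  thus ?thesis using assms by (simp add: power2_eq_square)
qed

lemma ident2:
  fixes N a c :: real and k :: nat assumes "N > 0"
  shows "N * N powr a / (N powr c * (N powr a)^k) = N powr (1 + a - c - a * real k)"
proof -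
  have "(N powr a)^k = N powr (a * real k)" using assms
    by (simp add: powr_realpow[symmetric] powr_powr)
  moreover have "N powr (1 + a - c - a * real k) = N powr 1 * N powr a / (N powr c * N powr (a * real k))"
  proof -
    have e1: "N powr (1 + a - c - a * real k) = N powr (1 + a - c) / N powr (a * real k)" by (rule powr_diff)
    have e2: "N powr (1 + a - c) = N powr (1 + a) / N powr c" by (rule powr_diff)
    have e3: "N powr (1 + a) = N powr 1 * N powr a" by (rule powr_add)
    show ?thesis unfolding e1 e2 e3 by simp
  qed
  ultimately show ?thesis using assms by simp
qed

theorem lemma4p6:
  fixes k :: nat and \<alpha> r p lam :: real
  assumes "k \<ge> 2" and "\<alpha> > 0" and "r > 0" and "0 < p" and "p < 1"
    and "(2 * real k - 1) * \<alpha> > 1" and "real k * \<alpha> \<le> 1"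
    and "real k \<ge> tau p * ln (tau p) / (tau p - 1)"
    and "r < 1 / ln (tau p)"
    and "lam > 0"
  shows "\<exists>\<epsilon> :: nat \<Rightarrow> real. \<epsilon> \<longlonglongrightarrow> 0 \<and>
    (\<lambda>n. Phi_c \<alpha> r p k n
           (real n * (1 / dpar \<alpha> n
              + lam / (real n powr (1 - (real k - 1) * \<alpha>) * ln (dpar \<alpha> n)))))
    \<in> o(\<lambda>n. exp (- (lam\<^sup>2 / 2 + \<epsilon> n)
                  * real n powr ((2 * real k - 1) * \<alpha> - 1) / (ln (dpar \<alpha> n))\<^sup>2))"
proof -
  note k2 = assms(1) and a0 = assms(2) and r0 = assms(3) and p0 = assms(4) and p1 = assms(5)
    and kb = assms(6) and ka = assms(7) and l0 = assms(10)
  have a1: "\<alpha> < 1"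
  proof -
    have "2 * \<alpha> \<le> real k * \<alpha>" using k2 a0 by (intro mult_right_mono) auto
    thus ?thesis using ka by linarith
  qed
  define \<beta> where "\<beta> = (2 * real k - 1) * \<alpha> - 1"
  have b0: "\<beta> > 0" unfolding \<beta>_def using kb by simp
  define d where "d = (\<lambda>n. dpar \<alpha> n)"
  define x where "x = (\<lambda>n. lam / (real n powr (1 - (real k - 1) * \<alpha>) * ln (d n)))"
  define u where "u = (\<lambda>n. x n * d n)"
  define G where "G = (\<lambda>n::nat. real n powr \<beta> / (\<alpha> * ln (real n))^2)"
  define C where "C = 2 * p / (1 - p) * real k * 2 ^ k * (r * lam)"
  define \<epsilon> where "\<epsilon> = (\<lambda>n. - (lam^2 * u n / (2 * (2 + u n))) - 1 / sqrt (G n))"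
  have Ld: "ln (d n) = \<alpha> * ln (real n)" if "n \<ge> 1" for n
    using that unfolding d_def dpar_def by (simp add: ln_powr)
  have uform: "u n = lam * real n powr (real k * \<alpha> - 1) / (\<alpha> * ln (real n))" if "n \<ge> 2" for n
  proof -
    have N: "real n > 0" using that by simp
    have "u n = lam * (real n powr \<alpha> / real n powr (1 - (real k - 1) * \<alpha>)) / ln (d n)"
      unfolding u_def x_def d_def dpar_def by (simp add: field_simps)
    also have "real n powr \<alpha> / real n powr (1 - (real k - 1) * \<alpha>) = real n powr (real k * \<alpha> - 1)"
      using N by (simp add: powr_diff[symmetric] algebra_simps)
    finally show ?thesis using Ld[of n] that by simp
  qed
  have u_bd: "0 \<le> u n \<and> u n \<le> lam / (\<alpha> * ln (real n))" if "n \<ge> 2" for n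
  proof -
    have N: "real n \<ge> 1" using that by simp
    have ln0: "ln (real n) > 0" using that by simp
    have "real n powr (real k * \<alpha> - 1) \<le> real n powr 0"
      using N ka by (intro powr_mono) auto
    hence pw: "real n powr (real k * \<alpha> - 1) \<le> 1" using N by simp
    have "lam * real n powr (real k * \<alpha> - 1) / (\<alpha> * ln (real n)) \<le> lam * 1 / (\<alpha> * ln (real n))"
      using pw l0 a0 ln0 by (intro divide_right_mono mult_left_mono) auto
    thus ?thesis unfolding uform[OF that] using l0 a0 ln0 by simp
  qed
  have u_lim: "u \<longlonglongrightarrow> 0"
  proof (rule tendsto_sandwich[of "\<lambda>_. 0" _ _ "\<lambda>n. lam / (\<alpha> * ln (real n))"])
    show "eventually (\<lambda>n. 0 \<le> u n) sequentially"
      using eventually_ge_at_top[of 2] by eventually_elim (use u_bd in auto)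
    show "eventually (\<lambda>n. u n \<le> lam / (\<alpha> * ln (real n))) sequentially"
      using eventually_ge_at_top[of 2] by eventually_elim (use u_bd in auto)
    show "((\<lambda>n. lam / (\<alpha> * ln (real n))) \<longlongrightarrow> 0) sequentially" by (rule ra1[OF l0 a0])
  qed simp
  have eps_lim: "\<epsilon> \<longlonglongrightarrow> 0"
  proof -
    have "((\<lambda>n. - (lam^2 * u n / (2 * (2 + u n))) - 1 / sqrt (G n)) \<longlongrightarrow> - (lam^2 * 0 / (2 * (2 + 0))) - 0) sequentially"
    proof (intro tendsto_intros u_lim)
      show "((\<lambda>n. 1 / sqrt (G n)) \<longlongrightarrow> 0) sequentially" unfolding G_def by (rule ra2[OF b0 a0])
    qed simp
    thus ?thesis unfolding \<epsilon>_def by simp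
  qed
  have ev_d2: "eventually (\<lambda>n. 2 \<le> d n) sequentially"
    unfolding d_def dpar_def by (rule ra3[OF a0])
  have ev_mu2: "eventually (\<lambda>n. 2 \<le> real n / d n) sequentially"
  proof -
    have "eventually (\<lambda>n::nat. 2 \<le> real n powr (1 - \<alpha>)) sequentially" by (rule ra4[OF a0 a1])
    thus ?thesis
    proof (rule eventually_mono)
      fix n :: nat assume "2 \<le> real n powr (1 - \<alpha>)"
      moreover have "real n powr (1 - \<alpha>) = real n / d n"
        unfolding d_def dpar_def by (cases "n = 0") (simp_all add: powr_diff)
      ultimately show "2 \<le> real n / d n" by simp
    qed
  qed
  have ev_mun: "eventually (\<lambda>n. 2 * (real n / d n) \<le> real n - 1) sequentially"
  proof -
    have "eventually (\<lambda>n::nat. 2 * real n powr (1 - \<alpha>) \<le> real n - 1) sequentially" by (rule ra5[OF a0 a1])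
    thus ?thesis
    proof (rule eventually_mono)
      fix n :: nat assume "2 * real n powr (1 - \<alpha>) \<le> real n - 1"
      moreover have "real n powr (1 - \<alpha>) = real n / d n"
        unfolding d_def dpar_def by (cases "n = 0") (simp_all add: powr_diff)
      ultimately show "2 * (real n / d n) \<le> real n - 1" by simp
    qed
  qed
  have ev_u1: "eventually (\<lambda>n. u n \<le> 1) sequentially"
  proof -
    have "eventually (\<lambda>n. u n < 1) sequentially" using u_lim by (rule order_tendstoD) simp
    thus ?thesis by eventually_elim simp
  qed
  have ev_G: "eventually (\<lambda>n. G n \<ge> 1) sequentially"
    unfolding G_def by (rule ra6[OF b0 a0])
  have lim_main: "((\<lambda>n. 6 * exp C * exp (- sqrt (G n))) \<longlongrightarrow> 6 * exp C * 0) sequentially"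
    by (intro tendsto_intros) (unfold G_def, rule ra7[OF b0 a0])
  define Phi where "Phi = (\<lambda>n. Phi_c \<alpha> r p k n
           (real n * (1 / dpar \<alpha> n
              + lam / (real n powr (1 - (real k - 1) * \<alpha>) * ln (dpar \<alpha> n)))))"
  define E where "E = (\<lambda>n. exp (- (lam\<^sup>2 / 2 + \<epsilon> n)
                  * real n powr ((2 * real k - 1) * \<alpha> - 1) / (ln (dpar \<alpha> n))\<^sup>2))"
  have key: "0 \<le> Phi n / E n \<and> Phi n / E n \<le> 6 * exp C * exp (- sqrt (G n))"
    if n2: "n \<ge> 2" and hd2: "2 \<le> d n" and hmu2: "2 \<le> real n / d n"
      and hmun: "2 * (real n / d n) \<le> real n - 1" and hu1: "u n \<le> 1" and hG: "G n \<ge> 1" for n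
  proof -
    have N: "real n > 0" using n2 by simp
    have ln0: "ln (real n) > 0" using n2 by simp
    have Lpos: "ln (d n) > 0" using Ld[of n] n2 a0 ln0 by simp
    have x0: "x n \<ge> 0" unfolding x_def using l0 Lpos by simp
    have k1: "k \<ge> 1" using k2 by simp
    have dd: "d n = dpar \<alpha> n" by (simp add: d_def)
    have xd: "x n = lam / (real n powr (1 - (real k - 1) * \<alpha>) * ln (d n))" by (simp add: x_def)
    have hu1': "x n * d n \<le> 1" using hu1 by (simp add: u_def)
    have PhiE: "Phi n = Phi_c \<alpha> r p k n (real n * (1 / d n + x n))"
      by (simp add: Phi_def d_def x_def)
    note PW = pointwise[OF k1 r0 p0 p1 dd hd2 xd x0 hmu2 hmun hu1', folded PhiE]
    define c where "c = 1 - (real k - 1) * \<alpha>"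
    define P where "P = real n powr c"
    define L where "L = ln (d n)"
    define D where "D = d n"
    have Pp: "P > 0" unfolding P_def using N by simp
    have Dp: "D > 0" unfolding D_def using hd2 by simp
    have Lp: "L > 0" unfolding L_def using Lpos .
    have xe: "x n = lam / (P * L)" unfolding x_def P_def L_def c_def ..
    have DD: "D = real n powr \<alpha>" unfolding D_def d_def dpar_def ..
    have I1: "(real n * x n)^2 / (real n / d n) = lam^2 * G n"
    proof -
      have "(real n * x n)^2 / (real n / d n) = lam^2 * ((real n * D / P^2) / L^2)"
        unfolding xe D_def[symmetric] using N Pp Dp Lp by (simp add: field_simps power2_eq_square)
      also have "real n * D / P^2 = real n powr \<beta>"
        unfolding DD P_def using ident1[OF N, of \<alpha> c] unfolding c_def \<beta>_def
        by (simp add: algebra_simps)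
      also have "L = \<alpha> * ln (real n)" unfolding L_def using Ld[of n] n2 by simp
      finally show ?thesis unfolding G_def by simp
    qed
    have I2: "r * (real n * ln (d n)) * (1 / d n) ^ k * (x n * d n) = r * lam"
    proof -
      have "r * (real n * ln (d n)) * (1 / d n) ^ k * (x n * d n) = r * lam * (real n * D / (P * D ^ k))"
    proof -
      have LD: "ln D = L" unfolding L_def D_def ..
      show ?thesis
        unfolding xe D_def[symmetric] LD using N Pp Dp Lp by (simp add: field_simps power_one_over)
    qed
      also have "real n * D / (P * D ^ k) = real n powr 0"
        unfolding DD P_def using ident2[OF N, of \<alpha> c k] unfolding c_def
        by (simp add: algebra_simps)
      finally show ?thesis using N by simp
    qed
    have EG: "E n = exp (- (lam^2 * G n / (2 + u n)) + sqrt (G n))"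
    proof -
      have L2: "(ln (dpar \<alpha> n))^2 = (\<alpha> * ln (real n))^2" using Ld[of n] n2 unfolding d_def by simp
      have u0: "u n \<ge> 0" using u_bd n2 by simp
      have sG: "sqrt (G n) > 0" using hG by simp
      have "(lam\<^sup>2 / 2 + \<epsilon> n) * G n = lam^2 * G n / (2 + u n) - sqrt (G n)"
      proof -
        have "G n / sqrt (G n) = sqrt (G n)" using hG by (simp add: real_div_sqrt)
        moreover have "lam\<^sup>2 / 2 - lam^2 * u n / (2 * (2 + u n)) = lam^2 / (2 + u n)"
          using u0 by (simp add: field_simps)
        moreover have "(lam\<^sup>2 / 2 + \<epsilon> n) * G n = (lam\<^sup>2 / 2 - lam^2 * u n / (2 * (2 + u n))) * G n - G n / sqrt (G n)"
          unfolding \<epsilon>_def by (simp add: algebra_simps)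
        ultimately show ?thesis by simp
      qed
      moreover have "- (lam\<^sup>2 / 2 + \<epsilon> n) * real n powr ((2 * real k - 1) * \<alpha> - 1) / (ln (dpar \<alpha> n))\<^sup>2
            = - ((lam\<^sup>2 / 2 + \<epsilon> n) * G n)"
        unfolding G_def L2 \<beta>_def by (simp only: mult_minus_left minus_divide_left times_divide_eq_right)
      ultimately show ?thesis unfolding E_def by simp
    qed
    have Ep: "E n > 0" unfolding E_def by simp
    have B: "Phi n \<le> 6 * exp (- (lam^2 * G n / (2 + u n))) * exp C"
      using PW(1) unfolding I1 I2 u_def C_def minus_divide_left by simp
    have "Phi n / E n \<le> 6 * exp (- (lam^2 * G n / (2 + u n))) * exp C / E n"
      using B Ep by (simp add: divide_right_mono)
    also have "\<dots> = 6 * exp C * exp (- sqrt (G n))"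
      unfolding EG exp_add exp_minus by (simp add: field_simps)
    finally show ?thesis using PW(2) Ep by simp
  qed
  have lim: "((\<lambda>n. Phi n / E n) \<longlongrightarrow> 0) sequentially"
  proof (rule tendsto_sandwich[of "\<lambda>_. 0" _ _ "\<lambda>n. 6 * exp C * exp (- sqrt (G n))"])
    have ev: "eventually (\<lambda>n. n \<ge> 2 \<and> 2 \<le> d n \<and> 2 \<le> real n / d n \<and> 2 * (real n / d n) \<le> real n - 1
        \<and> u n \<le> 1 \<and> G n \<ge> 1) sequentially"
      using eventually_ge_at_top[of 2] ev_d2 ev_mu2 ev_mun ev_u1 ev_G
      by eventually_elim auto
    show "eventually (\<lambda>n. 0 \<le> Phi n / E n) sequentially"
      using ev by eventually_elim (use key in blast)
    show "eventually (\<lambda>n. Phi n / E n \<le> 6 * exp C * exp (- sqrt (G n))) sequentially"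
      using ev by eventually_elim (use key in blast)
    show "((\<lambda>n. 6 * exp C * exp (- sqrt (G n))) \<longlongrightarrow> 0) sequentially"
      using lim_main by simp
  qed simp
  have PE: "Phi \<in> o(E)"
    by (rule smalloI_tendsto[OF lim]) (simp add: E_def)
  show ?thesis
    by (rule exI[of _ \<epsilon>], rule conjI[OF eps_lim], rule PE[unfolded Phi_def E_def])
qed


end
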